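(* Let $X$ be a Banach space, let $\varphi: X\to(-\infty,\infty]$ be a proper lower semicontinuous function, let $\bar{x}\in\operatorname{dom}\varphi$, and let $\bar{x}^*\in X^*$. The following are equivalent: (i) $\varphi$ is prox-bounded and $\bar{x}^*$ is a proximal subgradient of $\varphi$ at $\bar{x}$; (ii) $P_\lambda^{\bar{x}^*}\varphi(\bar{x}) = \{\bar{x}\}$ for some $\lambda>0$; (iii) $P_\lambda^{\bar{x}^*}\varphi(\bar{x}) = \{\bar{x}\}$ for all $\lambda>0$ sufficiently small.
   Context: $\varphi$ is prox-bounded if there exist $\alpha,\beta\in\mathbb{R}$ and $x_0\in X$ with $\varphi(x)\ge \alpha\|x-x_0\|^2+\beta$ for all $x\in X$. $\bar{x}^*\in X^*$ is a proximal subgradient of $\varphi$ at $\bar{x}\in\operatorname{dom}\varphi$ if there exist $r>0$ and $\varepsilon>0$ such that $\varphi(x)\ge\varphi(\bar{x})+\langle\bar{x}^*,x-\bar{x}\rangle-\frac{r}{2}\|x-\bar{x}\|^2$ for all $x$ in the open ball of radius $\varepsilon$ centered at $\bar{x}$. For $x^*\in X^*$ and $\lambda>0$, the $x^*$-proximal mapping is $P_\lambda^{x^*}\varphi(x) := \operatorname{argmin}_{w\in X}\{\varphi(w)-\langle x^*,w\rangle+\frac{1}{2\lambda}\|w-x\|^2\}$, $x\in X$. *)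

theory Defs
  imports "HOL-Analysis.Analysis"
begin

definition proper_fun :: "('a \<Rightarrow> ereal) \<Rightarrow> bool" where
  "proper_fun \<phi> \<longleftrightarrow> (\<forall>x. \<phi> x \<noteq> -\<infinity>) \<and> (\<exists>x. \<phi> x \<noteq> \<infinity>)"

definition lsc_fun :: "('a::topological_space \<Rightarrow> ereal) \<Rightarrow> bool" where
  "lsc_fun \<phi> \<longleftrightarrow> (\<forall>x. \<phi> x \<le> Liminf (at x) \<phi>)"

definition prox_bounded :: "('a::real_normed_vector \<Rightarrow> ereal) \<Rightarrow> bool" where
  "prox_bounded \<phi> \<longleftrightarrow>
     (\<exists>\<alpha> \<beta> :: real. \<exists>x0. \<forall>x. \<phi> x \<ge> ereal (\<alpha> * (norm (x - x0))\<^sup>2 + \<beta>))"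

definition proximal_subgradient ::
  "('a::real_normed_vector \<Rightarrow> ereal) \<Rightarrow> 'a \<Rightarrow> ('a \<Rightarrow>\<^sub>L real) \<Rightarrow> bool" where
  "proximal_subgradient \<phi> xb xs \<longleftrightarrow>
     (\<exists>r>0. \<exists>\<epsilon>>0. \<forall>x \<in> ball xb \<epsilon>.
        \<phi> x \<ge> \<phi> xb + ereal (blinfun_apply xs (x - xb) - r / 2 * (norm (x - xb))\<^sup>2))"

definition prox_map ::
  "('a::real_normed_vector \<Rightarrow> ereal) \<Rightarrow> ('a \<Rightarrow>\<^sub>L real) \<Rightarrow> real \<Rightarrow> 'a \<Rightarrow> 'a set" where
  "prox_map \<phi> xs lam x =
     (let f = (\<lambda>w. \<phi> w + ereal (- blinfun_apply xs w + (norm (w - x))\<^sup>2 / (2 * lam)))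
      in {w. \<forall>v. f w \<le> f v})"

end

theory Submission
  imports Defs
begin

lemma min_unique:
  fixes F :: "'a \<Rightarrow> 'b::linorder"
  shows "{w. \<forall>v. F w \<le> F v} = {a} \<longleftrightarrow> (\<forall>v. v \<noteq> a \<longrightarrow> F a < F v)"
proof
  assume h: "{w. \<forall>v. F w \<le> F v} = {a}"
  hence m: "\<forall>v. F a \<le> F v" by auto
  show "\<forall>v. v \<noteq> a \<longrightarrow> F a < F v"
  proof (intro allI impI, rule ccontr)
    fix v assume "v \<noteq> a" "\<not> F a < F v"
    hence "\<forall>u. F v \<le> F u" using m by (meson not_le order_trans)
    hence "v \<in> {w. \<forall>v. F w \<le> F v}" by auto
    thus False using h \<open>v \<noteq> a\<close> by auto
  qed
next
  assume h: "\<forall>v. v \<noteq> a \<longrightarrow> F a < F v"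
  show "{w. \<forall>v. F w \<le> F v} = {a}"
  proof safe
    fix w assume "\<forall>v. F w \<le> F v"
    thus "w = a" using h by (meson not_le)
  next
    fix v show "F a \<le> F v" using h by (cases "v = a") (auto intro: less_imp_le)
  qed
qed

lemma prox_char:
  fixes \<phi> :: "'a::real_normed_vector \<Rightarrow> ereal"
  assumes c: "\<phi> xb = ereal c" and nm: "\<forall>x. \<phi> x \<noteq> -\<infinity>"
  shows "prox_map \<phi> xs l xb = {xb} \<longleftrightarrow>
    (\<forall>v y. v \<noteq> xb \<longrightarrow> \<phi> v = ereal y \<longrightarrow>
        c - blinfun_apply xs xb < y - blinfun_apply xs v + (norm (v - xb))\<^sup>2 / (2 * l))"
proof -
  define F where "F = (\<lambda>w. \<phi> w + ereal (- blinfun_apply xs w + (norm (w - xb))\<^sup>2 / (2 * l)))"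
  have e: "F xb < F v \<longleftrightarrow> (\<forall>y. \<phi> v = ereal y \<longrightarrow>
        c - blinfun_apply xs xb < y - blinfun_apply xs v + (norm (v - xb))\<^sup>2 / (2 * l))" for v
    using nm[rule_format, of v] by (cases "\<phi> v") (auto simp: F_def c)
  show ?thesis
    unfolding prox_map_def Let_def F_def[symmetric] min_unique e by blast
qed


lemma part_ii_iii:
  fixes xs :: "'a::real_normed_vector \<Rightarrow>\<^sub>L real"
  assumes c: "\<phi> xb = ereal c" and nm: "\<forall>x. \<phi> x \<noteq> -\<infinity>"
    and l: "l > 0" "prox_map \<phi> xs l xb = {xb}" and l': "0 < l'" "l' \<le> l"
  shows "prox_map \<phi> xs l' xb = {xb}"
proof -
  have h: "\<forall>v y. v \<noteq> xb \<longrightarrow> \<phi> v = ereal y \<longrightarrow>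
        c - blinfun_apply xs xb < y - blinfun_apply xs v + (norm (v - xb))\<^sup>2 / (2 * l)"
    using l(2) prox_char[OF c nm] by blast
  have m: "(norm (v - xb))\<^sup>2 / (2 * l) \<le> (norm (v - xb))\<^sup>2 / (2 * l')" for v
    using l l' by (intro divide_left_mono) auto
  show ?thesis unfolding prox_char[OF c nm]
    using h m by (meson less_le_trans add_left_mono)
qed

lemma aux_ineq:
  fixes c B q y P K2 n2 t :: real
  assumes "c + B - q \<le> y" "- P \<le> B" "P \<le> (K2 + n2)/2" "q = t*n2"
  shows "-(1/2 + t)*n2 + (c - K2/2) \<le> y"
  using assms by (simp add: algebra_simps)

lemma part_ii_i:
  fixes xs :: "'a::real_normed_vector \<Rightarrow>\<^sub>L real"
  assumes c: "\<phi> xb = ereal c" and nm: "\<forall>x. \<phi> x \<noteq> -\<infinity>"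
    and l: "l > 0" "prox_map \<phi> xs l xb = {xb}"
  shows "prox_bounded \<phi> \<and> proximal_subgradient \<phi> xb xs"
proof -
  have h: "\<And>v y. \<phi> v = ereal y \<Longrightarrow>
        c + blinfun_apply xs (v - xb) - (norm (v - xb))\<^sup>2 / (2 * l) \<le> y"
  proof -
    fix v y assume vy: "\<phi> v = ereal y"
    show "c + blinfun_apply xs (v - xb) - (norm (v - xb))\<^sup>2 / (2 * l) \<le> y"
    proof (cases "v = xb")
      case True thus ?thesis using vy c by simp
    next
      case False
      hence "c - blinfun_apply xs xb < y - blinfun_apply xs v + (norm (v - xb))\<^sup>2 / (2 * l)"
        using l(2) prox_char[OF c nm] vy by blast
      thus ?thesis by (simp add: blinfun.diff_right)
    qed
  qed
  have pb: "prox_bounded \<phi>"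
    unfolding prox_bounded_def
  proof (intro exI allI)
    fix v
    let ?n = "norm (v - xb)" and ?K = "norm xs"
    show "\<phi> v \<ge> ereal (-(1/2 + 1/(2*l)) * ?n\<^sup>2 + (c - ?K\<^sup>2/2))"
    proof (cases "\<phi> v")
      case (real y)
      have a: "\<bar>blinfun_apply xs (v - xb)\<bar> \<le> ?K * ?n" using norm_blinfun[of xs "v - xb"] by simp
      have b: "?K * ?n \<le> (?K\<^sup>2 + ?n\<^sup>2)/2" 
      proof -
        have "0 \<le> (?K - ?n)\<^sup>2" by simp
        moreover have "(?K - ?n)\<^sup>2 = ?K\<^sup>2 + ?n\<^sup>2 - 2 * (?K * ?n)"
          by (simp add: power2_diff)
        ultimately have "2 * (?K * ?n) \<le> ?K\<^sup>2 + ?n\<^sup>2" by linarith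
        thus ?thesis by (simp add: field_simps)
      qed
      have f1: "c + blinfun_apply xs (v - xb) - ?n\<^sup>2 / (2 * l) \<le> y" using h real by blast
      have f2: "?n\<^sup>2 / (2 * l) = 1/(2*l) * ?n\<^sup>2" by simp
      have f3: "- (?K * ?n) \<le> blinfun_apply xs (v - xb)" using a by linarith
      have "-(1/2 + 1/(2*l)) * ?n\<^sup>2 + (c - ?K\<^sup>2/2) \<le> y"
        by (rule aux_ineq[OF f1 f3 b f2])
      thus ?thesis using real by simp
    qed (use nm in auto)
  qed
  have all: "\<phi> xb + ereal (blinfun_apply xs (x - xb) - 1 / l / 2 * (norm (x - xb))\<^sup>2) \<le> \<phi> x" for x
  proof (cases "\<phi> x")
    case (real y)
    have "c + blinfun_apply xs (x - xb) - (norm (x - xb))\<^sup>2 / (2 * l) \<le> y" using h real by blast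
    thus ?thesis using real c by simp
  qed (use nm in auto)
  have ps: "proximal_subgradient \<phi> xb xs"
    unfolding proximal_subgradient_def
    apply (rule exI[of _ "1/l"])
    using l all by auto
  show ?thesis using pb ps by blast
qed


lemma part_i_ii:
  fixes xs :: "'a::real_normed_vector \<Rightarrow>\<^sub>L real"
  assumes c: "\<phi> xb = ereal c" and nm: "\<forall>x. \<phi> x \<noteq> -\<infinity>"
    and pb: "prox_bounded \<phi>" and ps: "proximal_subgradient \<phi> xb xs"
  shows "\<exists>l>0. prox_map \<phi> xs l xb = {xb}"
proof -
  obtain r \<epsilon> where r: "r > 0" and e: "\<epsilon> > 0" and loc: "\<And>x. x \<in> ball xb \<epsilon> \<Longrightarrow>
        \<phi> x \<ge> \<phi> xb + ereal (blinfun_apply xs (x - xb) - r / 2 * (norm (x - xb))\<^sup>2)"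
    using ps unfolding proximal_subgradient_def by blast
  obtain \<alpha> \<beta> :: real and x0 where glob: "\<And>x. \<phi> x \<ge> ereal (\<alpha> * (norm (x - x0))\<^sup>2 + \<beta>)"
    using pb unfolding prox_bounded_def by blast
  define A where "A = max 0 (-\<alpha>)"
  define K where "K = norm xs"
  define d where "d = norm (xb - x0)"
  define C where "C = 2*A*d\<^sup>2 - \<beta> + c"
  define M where "M = (K + (\<bar>C\<bar>+1)/\<epsilon>)/\<epsilon> + r"
  define t where "t = 2*A + M"
  have A0: "A \<ge> 0" and K0: "K \<ge> 0" unfolding A_def K_def by auto
  have M0: "M \<ge> r" unfolding M_def using K0 e by (auto intro!: divide_nonneg_pos)
  have t0: "t > 0" unfolding t_def using A0 M0 r by linarith
  define l where "l = 1/(2*t)"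
  have l0: "l > 0" unfolding l_def using t0 by simp
  have key: "c < y - blinfun_apply xs (v - xb) + t * (norm (v - xb))\<^sup>2"
    if v: "v \<noteq> xb" and y: "\<phi> v = ereal y" for v y
  proof -
    define n where "n = norm (v - xb)"
    have n0: "n > 0" unfolding n_def using v by simp
    show ?thesis
    proof (cases "n < \<epsilon>")
      case True
      hence "v \<in> ball xb \<epsilon>" unfolding n_def by (simp add: dist_norm norm_minus_commute)
      from loc[OF this] have "c + (blinfun_apply xs (v - xb) - r / 2 * n\<^sup>2) \<le> y"
        using y c unfolding n_def by simp
      moreover have "r/2 * n\<^sup>2 < t * n\<^sup>2"
        using n0 r A0 M0 unfolding t_def by (intro mult_strict_right_mono) auto
      ultimately show ?thesis unfolding n_def by linarith
    next
      case False
      hence ne: "n \<ge> \<epsilon>" by simp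
      have g: "\<alpha> * (norm (v - x0))\<^sup>2 + \<beta> \<le> y" using glob[of v] y by simp
      have s1: "- A * (norm (v - x0))\<^sup>2 \<le> \<alpha> * (norm (v - x0))\<^sup>2"
        unfolding A_def by (intro mult_right_mono) auto
      have tri: "norm (v - x0) \<le> n + d" unfolding n_def d_def
        using norm_triangle_ineq[of "v - xb" "xb - x0"] by simp
      have sq: "(norm (v - x0))\<^sup>2 \<le> 2*n\<^sup>2 + 2*d\<^sup>2"
      proof -
        have "(norm (v - x0))\<^sup>2 \<le> (n + d)\<^sup>2" using tri by (intro power_mono) auto
        moreover have "(n+d)\<^sup>2 \<le> 2*n\<^sup>2 + 2*d\<^sup>2"
        proof -
          have "0 \<le> (n - d)\<^sup>2" by simp
          thus ?thesis by (simp add: power2_sum power2_diff)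
        qed
        ultimately show ?thesis by linarith
      qed
      have s2: "A * (norm (v - x0))\<^sup>2 \<le> A * (2*n\<^sup>2 + 2*d\<^sup>2)"
        using sq A0 by (intro mult_left_mono) auto
      have xsb: "blinfun_apply xs (v - xb) \<le> K * n"
        unfolding K_def n_def using norm_blinfun[of xs "v - xb"] by simp
      have tn: "t * n\<^sup>2 = 2*A*n\<^sup>2 + M*n\<^sup>2" unfolding t_def by (simp add: algebra_simps)
      have As: "A * (2*n\<^sup>2 + 2*d\<^sup>2) = 2*A*n\<^sup>2 + 2*A*d\<^sup>2" by (simp add: algebra_simps)
      have m1: "M * n\<^sup>2 \<ge> (M*\<epsilon>) * n"
      proof -
        have "M * n\<^sup>2 = (M * n) * n" by (simp add: power2_eq_square)
        moreover have "(M*\<epsilon>) * n \<le> (M * n) * n"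
          using ne M0 r n0 by (intro mult_right_mono mult_left_mono) auto
        ultimately show ?thesis by linarith
      qed
      have Me: "M*\<epsilon> \<ge> K + (\<bar>C\<bar>+1)/\<epsilon>"
      proof -
        have "M*\<epsilon> = K + (\<bar>C\<bar>+1)/\<epsilon> + r*\<epsilon>" unfolding M_def using e by (simp add: field_simps)
        thus ?thesis using r e by (simp add: mult_pos_pos)
      qed
      have m2: "(M*\<epsilon>) * n \<ge> K*n + ((\<bar>C\<bar>+1)/\<epsilon>) * n"
        using mult_right_mono[OF Me, of n] n0 by (simp add: algebra_simps)
      have m3: "((\<bar>C\<bar>+1)/\<epsilon>) * n \<ge> \<bar>C\<bar> + 1"
      proof -
        have "((\<bar>C\<bar>+1)/\<epsilon>) * n \<ge> ((\<bar>C\<bar>+1)/\<epsilon>) * \<epsilon>"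
          using ne e by (intro mult_left_mono) auto
        thus ?thesis using e by simp
      qed
      have "M*n\<^sup>2 - K*n - C > 0" using m1 m2 m3 by linarith
      thus ?thesis using g s1 s2 xsb tn As unfolding C_def n_def[symmetric] by linarith
    qed
  qed
  have "prox_map \<phi> xs l xb = {xb}"
    unfolding prox_char[OF c nm]
  proof (intro allI impI)
    fix v y assume "v \<noteq> xb" "\<phi> v = ereal y"
    from key[OF this] have "c < y - blinfun_apply xs (v - xb) + t * (norm (v - xb))\<^sup>2" .
    moreover have "(norm (v - xb))\<^sup>2 / (2 * l) = t * (norm (v - xb))\<^sup>2" unfolding l_def by simp
    ultimately show "c - blinfun_apply xs xb < y - blinfun_apply xs v + (norm (v - xb))\<^sup>2 / (2 * l)"
      by (simp add: blinfun.diff_right)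
  qed
  thus ?thesis using l0 by blast
qed

theorem lemma4p2:
  fixes \<phi> :: "'a::banach \<Rightarrow> ereal" and xb :: 'a and xs :: "'a \<Rightarrow>\<^sub>L real"
  assumes "proper_fun \<phi>" and "lsc_fun \<phi>" and "\<phi> xb \<noteq> \<infinity>"
  shows "((prox_bounded \<phi> \<and> proximal_subgradient \<phi> xb xs)
            \<longleftrightarrow> (\<exists>l>0. prox_map \<phi> xs l xb = {xb}))
       \<and> ((\<exists>l>0. prox_map \<phi> xs l xb = {xb})
            \<longleftrightarrow> (\<exists>l0>0. \<forall>l. 0 < l \<and> l < l0 \<longrightarrow> prox_map \<phi> xs l xb = {xb}))"
proof -
  have nm: "\<forall>x. \<phi> x \<noteq> -\<infinity>" using assms(1) unfolding proper_fun_def by blast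
  obtain c where c: "\<phi> xb = ereal c" using assms(3) nm by (cases "\<phi> xb") auto
  have 1: "(prox_bounded \<phi> \<and> proximal_subgradient \<phi> xb xs)
            \<longleftrightarrow> (\<exists>l>0. prox_map \<phi> xs l xb = {xb})"
    using part_i_ii[OF c nm] part_ii_i[OF c nm] by blast
  have 2: "(\<exists>l>0. prox_map \<phi> xs l xb = {xb})
            \<longleftrightarrow> (\<exists>l0>0. \<forall>l. 0 < l \<and> l < l0 \<longrightarrow> prox_map \<phi> xs l xb = {xb})"
  proof
    assume "\<exists>l>0. prox_map \<phi> xs l xb = {xb}"
    then obtain l where "l > 0" "prox_map \<phi> xs l xb = {xb}" by blast
    thus "\<exists>l0>0. \<forall>l. 0 < l \<and> l < l0 \<longrightarrow> prox_map \<phi> xs l xb = {xb}"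
      using part_ii_iii[OF c nm] by (meson less_imp_le)
  next
    assume "\<exists>l0>0. \<forall>l. 0 < l \<and> l < l0 \<longrightarrow> prox_map \<phi> xs l xb = {xb}"
    then obtain l0 where "l0 > 0" "\<forall>l. 0 < l \<and> l < l0 \<longrightarrow> prox_map \<phi> xs l xb = {xb}" by blast
    thus "\<exists>l>0. prox_map \<phi> xs l xb = {xb}"
      by (intro exI[of _ "l0/2"]) auto
  qed
  show ?thesis using 1 2 by blast
qed

end
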